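(* Suppose $1<q<n+1$. Let $\mu$ be a nonzero finite Borel measure on $S^{n-1}$ and $\overline\mu_m$ be constructed as in the context. Let $$E_m=\Big\{x\in\mathbb R^n:\frac{|x\cdot e_{1,m}|^2}{r_{1,m}^2}+\dots+\frac{|x\cdot e_{n,m}|^2}{r_{n,m}^2}\le1\Big\},$$ where $e_{1,m},\dots,e_{n,m}$ is an orthonormal basis of $\mathbb R^n$ and $0<r_{1,m}\le\dots\le r_{n,m}$. Assume $e_{1,m},\dots,e_{n,m}$ converge to an orthonormal basis $e_1,\dots,e_n$ and $r_{n,m}\ge1$. If $\mu$ satisfies $\frac{\mu(\xi_i\cap S^{n-1})}{|\mu|}<\frac{i+\min\{i,q-1\}}{n+q-1}$ for every $i$-dimensional subspace $\xi_i$, $i=1,\dots,n-1$, then there exist $\delta_0,t_0\in(0,1)$ and $N_0>0$ such that for each $m>N_0$, $$\frac{1}{|\overline\mu_m|}\int_{S^{n-1}}\log h_{E_m}\,d\overline\mu_m\ge\log\frac{\delta_0}{2}+t_0\log r_{n,m}+(1-t_0)\Bigg[\sum_{i=1}^{\lfloor q\rfloor-1}\frac{2}{n+q-1}\log r_{i,m}+\frac{q-\lfloor q\rfloor+1}{n+q-1}\log r_{\lfloor q\rfloor,m}+\sum_{i=\lfloor q\rfloor+1}^{n}\frac{1}{n+q-1}\log r_{i,m}\Bigg],$$ where a sum is empty if its upper index is smaller than its lower index.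
   Context: $h_K(v)=\max_{x\in K}x\cdot v$; $|\nu|$ is total mass. Construction: for each positive integer $m$, $U_{1,m},\dots,U_{\mathcal N_m,m}$ is a partition of $S^{n-1}$ into Borel sets of diameter less than $1/m$ with nonempty interior relative to $S^{n-1}$, $v_{i,m}\in U_{i,m}$ are in general position in dimension $n$, $\mu_m=\sum_{i=1}^{\mathcal N_m}(\mu(U_{i,m})+\mathcal N_m^{-2})\delta_{v_{i,m}}$ and $\overline\mu_m=\frac{|\mu|}{|\mu_m|}\mu_m$. *)

theory Defs
  imports "HOL-Analysis.Analysis"
begin

definition support_fun :: "'a::real_inner set \<Rightarrow> 'a \<Rightarrow> real" where
  "support_fun K u = (SUP x\<in>K. x \<bullet> u)"

definition total_mass :: "'a measure \<Rightarrow> real" where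
  "total_mass M = measure M (space M)"

definition discrete_measure :: "nat \<Rightarrow> (nat \<Rightarrow> 'a::topological_space) \<Rightarrow> (nat \<Rightarrow> real) \<Rightarrow> 'a measure" where
  "discrete_measure N v w =
     measure_of UNIV (sets borel) (\<lambda>A. \<Sum>i\<in>{1..N}. ennreal (w i) * indicator A (v i))"

definition general_position :: "nat \<Rightarrow> nat set \<Rightarrow> (nat \<Rightarrow> 'a::real_vector) \<Rightarrow> bool" where
  "general_position d I v \<longleftrightarrow>
     (\<forall>J\<subseteq>I. card J \<le> d \<longrightarrow> inj_on v J \<and> independent (v ` J))"

definition sphere_partition :: "nat \<Rightarrow> nat \<Rightarrow> (nat \<Rightarrow> 'a::euclidean_space set) \<Rightarrow> bool" where
  "sphere_partition m N U \<longleftrightarrow>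
     (\<forall>i\<in>{1..N}. U i \<in> sets borel \<and> U i \<subseteq> sphere 0 1 \<and> diameter (U i) < 1 / real m
                 \<and> (top_of_set (sphere 0 1)) interior_of (U i) \<noteq> {}) \<and>
     (\<forall>i\<in>{1..N}. \<forall>j\<in>{1..N}. i \<noteq> j \<longrightarrow> U i \<inter> U j = {}) \<and>
     (\<Union>i\<in>{1..N}. U i) = sphere 0 1"

definition approx_measure :: "'a::euclidean_space measure \<Rightarrow> nat \<Rightarrow> (nat \<Rightarrow> 'a set) \<Rightarrow> (nat \<Rightarrow> 'a) \<Rightarrow> 'a measure" where
  "approx_measure \<mu> N U v = discrete_measure N v (\<lambda>i. measure \<mu> (U i) + 1 / (real N)\<^sup>2)"

definition approx_measure_normalized :: "'a::euclidean_space measure \<Rightarrow> nat \<Rightarrow> (nat \<Rightarrow> 'a set) \<Rightarrow> (nat \<Rightarrow> 'a) \<Rightarrow> 'a measure" where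
  "approx_measure_normalized \<mu> N U v =
     scale_measure (ennreal (total_mass \<mu> / total_mass (approx_measure \<mu> N U v))) (approx_measure \<mu> N U v)"

definition orthonormal_family :: "nat \<Rightarrow> (nat \<Rightarrow> 'a::real_inner) \<Rightarrow> bool" where
  "orthonormal_family n e \<longleftrightarrow> (\<forall>i\<in>{1..n}. \<forall>j\<in>{1..n}. e i \<bullet> e j = (if i = j then 1 else 0))"

definition ellipsoid :: "nat \<Rightarrow> (nat \<Rightarrow> 'a::real_inner) \<Rightarrow> (nat \<Rightarrow> real) \<Rightarrow> 'a set" where
  "ellipsoid n e r = {x. (\<Sum>i\<in>{1..n}. \<bar>x \<bullet> e i\<bar>\<^sup>2 / (r i)\<^sup>2) \<le> 1}"

end

theory Submission
  imports Defs
begin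

lemma onf_inj:
  assumes "orthonormal_family n e"
  shows "inj_on e {1..n}"
proof (rule inj_onI)
  fix a b assume ab: "a \<in> {1..n}" "b \<in> {1..n}" "e a = e b"
  show "a = b"
  proof (rule ccontr)
    assume "a \<noteq> b"
    have "e a \<bullet> e b = (if a = b then 1 else 0)" using assms ab(1,2) unfolding orthonormal_family_def by blast
    moreover have "e a \<bullet> e a = (if a = a then 1 else 0)" using assms ab(1) unfolding orthonormal_family_def by blast
    ultimately show False using ab(3) \<open>a \<noteq> b\<close> by simp
  qed
qed

lemma onf_indep:
  assumes "orthonormal_family n e"
  shows "independent (e ` {1..n})"
proof (rule pairwise_orthogonal_independent)
  show "pairwise orthogonal (e ` {1..n})"
    using assms unfolding pairwise_def orthogonal_def orthonormal_family_def by fastforce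
  show "0 \<notin> e ` {1..n}"
  proof
    assume "0 \<in> e ` {1..n}"
    then obtain a where "a \<in> {1..n}" "e a = 0" by auto
    with assms show False unfolding orthonormal_family_def by fastforce
  qed
qed

lemma onf_expand:
  fixes e :: "nat \<Rightarrow> real^'n"
  assumes onf: "orthonormal_family CARD('n) e"
  shows "x = (\<Sum>l\<in>{1..CARD('n)}. (x \<bullet> e l) *\<^sub>R e l)"
proof -
  let ?n = "CARD('n)"
  let ?B = "e ` {1..?n}"
  have cardB: "card ?B = ?n" using onf_inj[OF onf] by (simp add: card_image)
  have "independent ?B" by (rule onf_indep[OF onf])
  then have sp: "UNIV \<subseteq> span ?B"
    using card_eq_dim[of ?B UNIV] cardB by (simp add: dim_UNIV)
  define y where "y = x - (\<Sum>l\<in>{1..?n}. (x \<bullet> e l) *\<^sub>R e l)"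
  have yk: "y \<bullet> e k = 0" if k: "k \<in> {1..?n}" for k
  proof -
    have "(\<Sum>l\<in>{1..?n}. (x \<bullet> e l) *\<^sub>R e l) \<bullet> e k = (\<Sum>l\<in>{1..?n}. (x \<bullet> e l) * (e l \<bullet> e k))"
      by (simp add: inner_sum_left)
    also have "\<dots> = (\<Sum>l\<in>{1..?n}. if l = k then x \<bullet> e k else 0)"
      using onf k unfolding orthonormal_family_def by (intro sum.cong) auto
    also have "\<dots> = x \<bullet> e k" using k by simp
    finally show ?thesis unfolding y_def by (simp add: inner_diff_left)
  qed
  have "orthogonal y y"
  proof (rule orthogonal_to_span[where S="?B"])
    show "y \<in> span ?B" using sp by auto
    show "orthogonal y z" if "z \<in> ?B" for z using that yk by (auto simp: orthogonal_def)
  qed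
  then have "y = 0" by (simp add: orthogonal_def)
  then show ?thesis unfolding y_def by simp
qed

lemma onf_parseval:
  fixes e :: "nat \<Rightarrow> real^'n"
  assumes onf: "orthonormal_family CARD('n) e"
  shows "(norm x)\<^sup>2 = (\<Sum>l\<in>{1..CARD('n)}. (x \<bullet> e l)\<^sup>2)"
proof -
  have "(norm x)\<^sup>2 = x \<bullet> x" by (simp add: power2_norm_eq_inner)
  also have "\<dots> = x \<bullet> (\<Sum>l\<in>{1..CARD('n)}. (x \<bullet> e l) *\<^sub>R e l)"
    using onf_expand[OF onf, of x] by simp
  also have "\<dots> = (\<Sum>l\<in>{1..CARD('n)}. (x \<bullet> e l)\<^sup>2)"
    by (simp add: inner_sum_right power2_eq_square)
  finally show ?thesis .
qed

lemma ell_bound: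
  fixes e :: "nat \<Rightarrow> real^'n"
  assumes onf: "orthonormal_family CARD('n) e"
    and rpos: "\<And>i. i \<in> {1..CARD('n)} \<Longrightarrow> 0 < r i"
    and y: "y \<in> ellipsoid CARD('n) e r"
  shows "norm y \<le> 1 + (\<Sum>i\<in>{1..CARD('n)}. (r i)\<^sup>2)"
proof -
  let ?n = "CARD('n)"
  have S: "(\<Sum>i\<in>{1..?n}. \<bar>y \<bullet> e i\<bar>\<^sup>2 / (r i)\<^sup>2) \<le> 1" using y by (simp add: ellipsoid_def)
  have each: "(y \<bullet> e i)\<^sup>2 \<le> (r i)\<^sup>2" if i: "i \<in> {1..?n}" for i
  proof -
    have "\<bar>y \<bullet> e i\<bar>\<^sup>2 / (r i)\<^sup>2 \<le> (\<Sum>i\<in>{1..?n}. \<bar>y \<bullet> e i\<bar>\<^sup>2 / (r i)\<^sup>2)"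
      by (rule member_le_sum) (use i in auto)
    with S have "\<bar>y \<bullet> e i\<bar>\<^sup>2 / (r i)\<^sup>2 \<le> 1" by linarith
    moreover have "(r i)\<^sup>2 > 0" using rpos[OF i] by simp
    ultimately show ?thesis by (simp add: divide_le_eq)
  qed
  have "(norm y)\<^sup>2 \<le> (\<Sum>i\<in>{1..?n}. (r i)\<^sup>2)"
    unfolding onf_parseval[OF onf, of y] by (rule sum_mono) (rule each)
  moreover have "norm y \<le> 1 + (norm y)\<^sup>2"
  proof -
    have "0 \<le> (norm y - 1)\<^sup>2" by simp
    then have "2 * norm y \<le> (norm y)\<^sup>2 + 1" unfolding power2_diff by simp
    then show ?thesis using norm_ge_zero[of y] by linarith
  qed
  ultimately show ?thesis by linarith
qed

lemma zero_in_ell: "0 \<in> ellipsoid n e r"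
  by (simp add: ellipsoid_def)

lemma supp_bdd:
  fixes e :: "nat \<Rightarrow> real^'n"
  assumes onf: "orthonormal_family CARD('n) e"
    and rpos: "\<And>i. i \<in> {1..CARD('n)} \<Longrightarrow> 0 < r i"
  shows "bdd_above ((\<lambda>z. z \<bullet> x) ` ellipsoid CARD('n) e r)"
proof (rule bdd_aboveI2)
  fix z assume z: "z \<in> ellipsoid CARD('n) e r"
  have "z \<bullet> x \<le> norm z * norm x" by (rule norm_cauchy_schwarz)
  also have "\<dots> \<le> (1 + (\<Sum>i\<in>{1..CARD('n)}. (r i)\<^sup>2)) * norm x"
    by (rule mult_right_mono[OF ell_bound[OF onf rpos z]]) auto
  finally show "z \<bullet> x \<le> (1 + (\<Sum>i\<in>{1..CARD('n)}. (r i)\<^sup>2)) * norm x" .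
qed

lemma supp_lower:
  fixes e :: "nat \<Rightarrow> real^'n"
  assumes onf: "orthonormal_family CARD('n) e"
    and rpos: "\<And>i. i \<in> {1..CARD('n)} \<Longrightarrow> 0 < r i"
    and l: "l \<in> {1..CARD('n)}"
  shows "r l * \<bar>x \<bullet> e l\<bar> \<le> support_fun (ellipsoid CARD('n) e r) x"
proof -
  let ?n = "CARD('n)"
  define y where "y = (r l * sgn (x \<bullet> e l)) *\<^sub>R e l"
  have yi: "y \<bullet> e i = (if i = l then r l * sgn (x \<bullet> e l) else 0)" if i: "i \<in> {1..?n}" for i
    using onf i l unfolding y_def orthonormal_family_def by (auto simp: inner_commute)
  have "(\<Sum>i\<in>{1..?n}. \<bar>y \<bullet> e i\<bar>\<^sup>2 / (r i)\<^sup>2) = (\<Sum>i\<in>{1..?n}. if i = l then \<bar>r l * sgn (x \<bullet> e l)\<bar>\<^sup>2 / (r l)\<^sup>2 else 0)"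
    by (rule sum.cong) (auto simp: yi)
  also have "\<dots> = \<bar>r l * sgn (x \<bullet> e l)\<bar>\<^sup>2 / (r l)\<^sup>2" using l by simp
  also have "\<dots> \<le> 1" using rpos[OF l]
    by (cases "x \<bullet> e l = 0") (auto simp: abs_mult power_mult_distrib abs_sgn_eq)
  finally have yE: "y \<in> ellipsoid ?n e r" by (simp add: ellipsoid_def)
  have "y \<bullet> x = r l * \<bar>x \<bullet> e l\<bar>"
    unfolding y_def by (simp add: inner_commute abs_sgn mult.assoc)
  moreover have "y \<bullet> x \<le> support_fun (ellipsoid ?n e r) x"
    unfolding support_fun_def by (rule cSUP_upper[OF yE supp_bdd[OF onf rpos]])
  ultimately show ?thesis by simp
qed

lemma supp_convex:
  fixes e :: "nat \<Rightarrow> real^'n"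
  assumes onf: "orthonormal_family CARD('n) e"
    and rpos: "\<And>i. i \<in> {1..CARD('n)} \<Longrightarrow> 0 < r i"
  shows "convex_on UNIV (support_fun (ellipsoid CARD('n) e r))"
proof (rule convex_onI)
  let ?E = "ellipsoid CARD('n) e r"
  fix t :: real and x y :: "real^'n"
  assume t: "t > 0" "t < 1"
  show "support_fun ?E ((1 - t) *\<^sub>R x + t *\<^sub>R y) \<le> (1 - t) * support_fun ?E x + t * support_fun ?E y"
    unfolding support_fun_def
  proof (rule cSUP_least)
    show "?E \<noteq> {}" using zero_in_ell by auto
    fix z assume z: "z \<in> ?E"
    have "z \<bullet> x \<le> (SUP z\<in>?E. z \<bullet> x)" by (rule cSUP_upper[OF z supp_bdd[OF onf rpos]])
    moreover have "z \<bullet> y \<le> (SUP z\<in>?E. z \<bullet> y)" by (rule cSUP_upper[OF z supp_bdd[OF onf rpos]])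
    ultimately have "(1 - t) * (z \<bullet> x) + t * (z \<bullet> y) \<le> (1 - t) * (SUP z\<in>?E. z \<bullet> x) + t * (SUP z\<in>?E. z \<bullet> y)"
      using t by (intro add_mono mult_left_mono) auto
    then show "z \<bullet> ((1 - t) *\<^sub>R x + t *\<^sub>R y) \<le> (1 - t) * (SUP z\<in>?E. z \<bullet> x) + t * (SUP z\<in>?E. z \<bullet> y)"
      by (simp add: inner_add_right)
  qed
qed auto

lemma supp_cont:
  fixes e :: "nat \<Rightarrow> real^'n"
  assumes onf: "orthonormal_family CARD('n) e"
    and rpos: "\<And>i. i \<in> {1..CARD('n)} \<Longrightarrow> 0 < r i"
  shows "continuous_on UNIV (support_fun (ellipsoid CARD('n) e r))"
  by (rule convex_on_continuous[OF open_UNIV supp_convex[OF onf rpos]])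

lemma discrete_eq_distr:
  fixes N :: nat and v :: "nat \<Rightarrow> 'a::topological_space"
  shows "discrete_measure N v w = distr (point_measure {1..N} (\<lambda>i. ennreal (w i))) borel v"
proof -
  let ?D = "distr (point_measure {1..N} (\<lambda>i. ennreal (w i))) borel v"
  have vm: "v \<in> measurable (point_measure {1..N} (\<lambda>i. ennreal (w i))) borel" by simp
  have "?D = measure_of (space ?D) (sets ?D) (emeasure ?D)" by (rule measure_of_of_measure[symmetric])
  also have "\<dots> = measure_of UNIV (sets borel) (emeasure ?D)" by simp
  also have "\<dots> = measure_of UNIV (sets borel) (\<lambda>A. \<Sum>i\<in>{1..N}. ennreal (w i) * indicator A (v i))"
  proof (rule measure_of_eq)
    show "sets borel \<subseteq> Pow UNIV" by simp
    fix a :: "'a set" assume "a \<in> sigma_sets UNIV (sets borel)"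
    then have a: "a \<in> sets borel" using sets.sigma_sets_eq[of "borel::'a measure"] by simp
    have "emeasure ?D a = emeasure (point_measure {1..N} (\<lambda>i. ennreal (w i))) (v -` a \<inter> {1..N})"
      using emeasure_distr[OF vm, of a] a by (simp add: space_point_measure)
    also have "\<dots> = (\<Sum>i\<in>{1..N} \<inter> {i. v i \<in> a}. ennreal (w i))"
    proof -
      have "v -` a \<inter> {1..N} = {1..N} \<inter> {i. v i \<in> a}" by auto
      moreover have "emeasure (point_measure {1..N} (\<lambda>i. ennreal (w i))) (v -` a \<inter> {1..N}) = (\<Sum>i\<in>v -` a \<inter> {1..N}. ennreal (w i))"
        by (rule emeasure_point_measure_finite) auto
      ultimately show ?thesis by simp
    qed
    also have "\<dots> = (\<Sum>i\<in>{1..N}. ennreal (w i) * indicator a (v i))"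
      by (auto simp add: sum.inter_restrict indicator_def of_bool_def intro!: sum.cong)
    finally show "emeasure ?D a = (\<Sum>i\<in>{1..N}. ennreal (w i) * indicator a (v i))" .
  qed
  finally show ?thesis unfolding discrete_measure_def by simp
qed

lemma scale_distr:
  fixes N :: nat and v :: "nat \<Rightarrow> 'a::topological_space"
  assumes c: "0 \<le> c" and w: "\<And>i. i \<in> {1..N} \<Longrightarrow> 0 \<le> w i"
  shows "scale_measure (ennreal c) (distr (point_measure {1..N} (\<lambda>i. ennreal (w i))) borel v)
       = distr (point_measure {1..N} (\<lambda>i. ennreal (c * w i))) borel v"
proof (rule measure_eqI)
  show "sets (scale_measure (ennreal c) (distr (point_measure {1..N} (\<lambda>i. ennreal (w i))) borel v)) =
        sets (distr (point_measure {1..N} (\<lambda>i. ennreal (c * w i))) borel v)" by simp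
  fix A assume "A \<in> sets (scale_measure (ennreal c) (distr (point_measure {1..N} (\<lambda>i. ennreal (w i))) borel v))"
  then have A: "A \<in> sets borel" by simp
  have e1: "emeasure (distr (point_measure {1..N} (\<lambda>i. ennreal (w' i))) borel v) A = (\<Sum>i\<in>v -` A \<inter> {1..N}. ennreal (w' i))" for w'
    using A by (subst emeasure_distr) (auto simp: space_point_measure emeasure_point_measure_finite)
  show "emeasure (scale_measure (ennreal c) (distr (point_measure {1..N} (\<lambda>i. ennreal (w i))) borel v)) A =
        emeasure (distr (point_measure {1..N} (\<lambda>i. ennreal (c * w i))) borel v) A"
  proof -
    have "emeasure (scale_measure (ennreal c) (distr (point_measure {1..N} (\<lambda>i. ennreal (w i))) borel v)) A
        = ennreal c * (\<Sum>i\<in>v -` A \<inter> {1..N}. ennreal (w i))" by (simp only: emeasure_scale_measure e1)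
    also have "\<dots> = (\<Sum>i\<in>v -` A \<inter> {1..N}. ennreal (c * w i))"
      using c w by (auto simp: sum_distrib_left ennreal_mult intro!: sum.cong)
    also have "\<dots> = emeasure (distr (point_measure {1..N} (\<lambda>i. ennreal (c * w i))) borel v) A"
      by (simp only: e1)
    finally show ?thesis .
  qed
qed

lemma int_distr_pm:
  fixes f :: "'a::topological_space \<Rightarrow> real" and N :: nat
  assumes f: "f \<in> borel_measurable borel" and p: "\<And>i. i \<in> {1..N} \<Longrightarrow> 0 \<le> p i"
  shows "integral\<^sup>L (distr (point_measure {1..N} (\<lambda>i. ennreal (p i))) borel v) f = (\<Sum>i\<in>{1..N}. p i * f (v i))"
proof -
  have vm: "v \<in> measurable (point_measure {1..N} (\<lambda>i. ennreal (p i))) borel" by simp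
  have "integral\<^sup>L (distr (point_measure {1..N} (\<lambda>i. ennreal (p i))) borel v) f
     = integral\<^sup>L (point_measure {1..N} (\<lambda>i. ennreal (p i))) (\<lambda>i. f (v i))"
    by (rule integral_distr[OF vm f])
  also have "\<dots> = (\<Sum>i\<in>{1..N}. p i * f (v i))"
    using p by (subst lebesgue_integral_point_measure_finite) auto
  finally show ?thesis .
qed

lemma measure_distr_pm:
  fixes v :: "nat \<Rightarrow> 'a::topological_space" and N :: nat
  assumes A: "A \<in> sets borel" and p: "\<And>i. i \<in> {1..N} \<Longrightarrow> 0 \<le> p i"
  shows "measure (distr (point_measure {1..N} (\<lambda>i. ennreal (p i))) borel v) A = (\<Sum>i\<in>{1..N}. p i * indicator A (v i))"
proof -
  have "measure (distr (point_measure {1..N} (\<lambda>i. ennreal (p i))) borel v) A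
      = integral\<^sup>L (distr (point_measure {1..N} (\<lambda>i. ennreal (p i))) borel v) (indicator A)"
    by simp
  also have "\<dots> = (\<Sum>i\<in>{1..N}. p i * indicator A (v i))"
    by (rule int_distr_pm) (use A p in auto)
  finally show ?thesis .
qed

lemma abel_sum:
  fixes V L :: "nat \<Rightarrow> real"
  assumes V0: "V 0 = 0"
  shows "(\<Sum>i\<in>{1..n}. (V i - V (i - 1)) * L i) = V n * L n - (\<Sum>i\<in>{1..<n}. V i * (L (Suc i) - L i))"
proof (induction n)
  case 0
  then show ?case using V0 by simp
next
  case (Suc n)
  have s1: "{1..Suc n} = insert (Suc n) {1..n}" by auto
  have s2: "{1..<Suc n} = (if n = 0 then {} else insert n {1..<n})" by auto
  show ?case
  proof (cases "n = 0")
    case True then show ?thesis using V0 by simp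
  next
    case False
    have "(\<Sum>i\<in>{1..Suc n}. (V i - V (i - 1)) * L i) = (V (Suc n) - V n) * L (Suc n) + (\<Sum>i\<in>{1..n}. (V i - V (i - 1)) * L i)"
      unfolding s1 by simp
    also have "\<dots> = (V (Suc n) - V n) * L (Suc n) + V n * L n - (\<Sum>i\<in>{1..<n}. V i * (L (Suc i) - L i))"
      using Suc.IH by simp
    also have "\<dots> = V (Suc n) * L (Suc n) - (\<Sum>i\<in>{1..<Suc n}. V i * (L (Suc i) - L i))"
      unfolding s2 using False by (simp add: algebra_simps)
    finally show ?thesis .
  qed
qed

lemma bracket_eq:
  fixes q :: real and n :: nat and L :: "nat \<Rightarrow> real"
  assumes q: "1 < q" "q < real n + 1"
  defines "k \<equiv> nat \<lfloor>q\<rfloor>"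
  shows "(\<Sum>i\<in>{1..k-1}. 2 / (real n + q - 1) * L i)
                  + (q - real k + 1) / (real n + q - 1) * L k
                  + (\<Sum>i\<in>{k+1..n}. 1 / (real n + q - 1) * L i)
       = L n - (\<Sum>i\<in>{1..<n}. (real i + min (real i) (q - 1)) / (real n + q - 1) * (L (Suc i) - L i))"
proof -
  define D where "D = real n + q - 1"
  have Dpos: "D > 0" using q unfolding D_def by simp
  define V where "V i = real i + min (real i) (q - 1)" for i :: nat
  have k1: "1 \<le> k" using q unfolding k_def by linarith
  have kq: "real k \<le> q" "q < real k + 1" using q unfolding k_def by linarith+
  have kn: "k \<le> n" using kq q by linarith
  have V0: "V 0 = 0" unfolding V_def using q by simp
  have Vn: "V n = D" unfolding V_def D_def using kq kn by (simp add: min_def)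
  have d1: "V i - V (i - 1) = 2" if "i \<in> {1..k-1}" for i
  proof -
    have "real i \<le> q - 1" "real (i - 1) = real i - 1" using that kq k1 by auto
    then show ?thesis unfolding V_def by (simp add: min_def)
  qed
  have d2: "V k - V (k - 1) = q - real k + 1"
  proof -
    have "real (k - 1) = real k - 1" using k1 by auto
    then show ?thesis unfolding V_def using kq by (simp add: min_def)
  qed
  have d3: "V i - V (i - 1) = 1" if "i \<in> {k+1..n}" for i
  proof -
    have "real i \<ge> real k + 1" "real (i - 1) = real i - 1" using that k1 by auto
    then show ?thesis unfolding V_def using kq by (simp add: min_def)
  qed
  have split: "{1..n} = {1..k-1} \<union> ({k} \<union> {k+1..n})" using k1 kn by auto
  have "(\<Sum>i\<in>{1..n}. (V i - V (i - 1)) * L i)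
      = (\<Sum>i\<in>{1..k-1}. (V i - V (i - 1)) * L i) + ((V k - V (k - 1)) * L k + (\<Sum>i\<in>{k+1..n}. (V i - V (i - 1)) * L i))"
    unfolding split by (subst sum.union_disjoint, simp, simp, force)+ simp
  also have "\<dots> = (\<Sum>i\<in>{1..k-1}. 2 * L i) + ((q - real k + 1) * L k + (\<Sum>i\<in>{k+1..n}. 1 * L i))"
    using d1 d2 d3 by simp
  finally have A: "(\<Sum>i\<in>{1..k-1}. 2 * L i) + (q - real k + 1) * L k + (\<Sum>i\<in>{k+1..n}. 1 * L i)
       = D * L n - (\<Sum>i\<in>{1..<n}. V i * (L (Suc i) - L i))"
    using abel_sum[of V L n, OF V0] Vn by simp
  have "(\<Sum>i\<in>{1..k-1}. 2 / D * L i) + (q - real k + 1) / D * L k + (\<Sum>i\<in>{k+1..n}. 1 / D * L i)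
      = ((\<Sum>i\<in>{1..k-1}. 2 * L i) + (q - real k + 1) * L k + (\<Sum>i\<in>{k+1..n}. 1 * L i)) / D"
  proof -
    have e1: "(\<Sum>i\<in>{1..k-1}. 2 / D * L i) = (\<Sum>i\<in>{1..k-1}. 2 * L i) / D" by (simp add: sum_divide_distrib)
    have e3: "(\<Sum>i\<in>{k+1..n}. 1 / D * L i) = (\<Sum>i\<in>{k+1..n}. 1 * L i) / D" by (simp add: sum_divide_distrib)
    have e2: "(q - real k + 1) / D * L k = (q - real k + 1) * L k / D" by simp
    show ?thesis unfolding e1 e2 e3 by (simp only: add_divide_distrib)
  qed
  also have "\<dots> = L n - (\<Sum>i\<in>{1..<n}. V i / D * (L (Suc i) - L i))"
    unfolding A using Dpos by (simp add: diff_divide_distrib sum_divide_distrib)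
  finally show ?thesis unfolding D_def V_def .
qed

lemma onf_restrict: "orthonormal_family n e \<Longrightarrow> i \<le> n \<Longrightarrow> orthonormal_family i e"
  unfolding orthonormal_family_def by auto

lemma onf_val: "orthonormal_family n e \<Longrightarrow> a \<in> {1..n} \<Longrightarrow> b \<in> {1..n} \<Longrightarrow> e a \<bullet> e b = (if a = b then 1 else 0)"
  unfolding orthonormal_family_def by blast

lemma span_slice_orth:
  fixes e0 :: "nat \<Rightarrow> real^'n"
  assumes onf: "orthonormal_family n e0" and x: "x \<in> span (e0 ` {1..i})" and l: "l \<in> {Suc i..n}"
  shows "x \<bullet> e0 l = 0"
proof -
  have "orthogonal (e0 l) x"
  proof (rule orthogonal_to_span[OF x])
    fix y assume "y \<in> e0 ` {1..i}"
    then obtain a where a: "a \<in> {1..i}" "y = e0 a" by auto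
    then show "orthogonal (e0 l) y" using onf_val[OF onf, of l a] l a by (auto simp: orthogonal_def)
  qed
  then show ?thesis by (simp add: orthogonal_def inner_commute)
qed

lemma span_slice_mem:
  fixes e0 :: "nat \<Rightarrow> real^'n"
  assumes onf: "orthonormal_family CARD('n) e0" and i: "i \<le> CARD('n)"
    and x: "\<And>l. l \<in> {Suc i..CARD('n)} \<Longrightarrow> x \<bullet> e0 l = 0"
  shows "x \<in> span (e0 ` {1..i})"
proof -
  have "x = (\<Sum>l\<in>{1..CARD('n)}. (x \<bullet> e0 l) *\<^sub>R e0 l)" by (rule onf_expand[OF onf])
  also have "\<dots> = (\<Sum>l\<in>{1..i}. (x \<bullet> e0 l) *\<^sub>R e0 l)"
    by (rule sum.mono_neutral_right) (use i x in auto)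
  finally have xe: "x = (\<Sum>l\<in>{1..i}. (x \<bullet> e0 l) *\<^sub>R e0 l)" .
  have "(\<Sum>l\<in>{1..i}. (x \<bullet> e0 l) *\<^sub>R e0 l) \<in> span (e0 ` {1..i})"
    by (intro span_sum span_scale span_base) auto
  with xe show ?thesis by simp
qed

lemma span_slice_dim:
  fixes e0 :: "nat \<Rightarrow> real^'n"
  assumes onf: "orthonormal_family n e0" and i: "i \<le> n"
  shows "dim (span (e0 ` {1..i})) = i"
proof -
  have o: "orthonormal_family i e0" by (rule onf_restrict[OF onf i])
  have "dim (span (e0 ` {1..i})) = card (e0 ` {1..i})"
    by (rule dim_span_eq_card_independent[OF onf_indep[OF o]])
  also have "\<dots> = i" using onf_inj[OF o] by (simp add: card_image)
  finally show ?thesis .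
qed

lemma partition_card:
  fixes e0 :: "nat \<Rightarrow> real^'n" and U :: "nat \<Rightarrow> (real^'n) set"
  assumes onf: "orthonormal_family CARD('n) e0" and n2: "CARD('n) \<ge> 2" and m: "m \<ge> 1"
    and P: "sphere_partition m N U"
  shows "m + 1 \<le> N"
proof -
  let ?n = "CARD('n)"
  define b1 where "b1 = e0 1"
  define b2 where "b2 = e0 2"
  have o11: "b1 \<bullet> b1 = 1" and o22: "b2 \<bullet> b2 = 1" and o12: "b1 \<bullet> b2 = 0" and o21: "b2 \<bullet> b1 = 0"
    unfolding b1_def b2_def
    using onf_val[OF onf, of 1 1] onf_val[OF onf, of 2 2] onf_val[OF onf, of 1 2] onf_val[OF onf, of 2 1] n2 by auto
  have ne1: "norm b1 = 1" using o11 by (simp add: norm_eq_sqrt_inner)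
  define a where "a k = real k / real m" for k :: nat
  define p where "p k = a k *\<^sub>R b1 + sqrt (1 - (a k)\<^sup>2) *\<^sub>R b2" for k
  have a01: "0 \<le> a k" "a k \<le> 1" if "k \<in> {0..m}" for k using that m unfolding a_def by auto
  have psph: "p k \<in> sphere 0 1" if k: "k \<in> {0..m}" for k
  proof -
    have sq: "(sqrt (1 - (a k)\<^sup>2))\<^sup>2 = 1 - (a k)\<^sup>2" using a01[OF k] by (simp add: power_le_one)
    have "p k \<bullet> p k = (a k)\<^sup>2 + (sqrt (1 - (a k)\<^sup>2))\<^sup>2"
      unfolding p_def by (simp only: inner_add_left inner_add_right inner_scaleR_left inner_scaleR_right o11 o22 o12 o21) (simp add: power2_eq_square)
    also have "\<dots> = 1" using sq by simp
    finally have "p k \<bullet> p k = 1" .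
    then have "norm (p k) = 1" by (simp add: norm_eq_sqrt_inner)
    then show ?thesis by simp
  qed
  have cover: "(\<Union>i\<in>{1..N}. U i) = sphere 0 1" using P unfolding sphere_partition_def by blast
  have pieces: "\<And>i. i \<in> {1..N} \<Longrightarrow> U i \<subseteq> sphere 0 1 \<and> diameter (U i) < 1 / real m"
    using P unfolding sphere_partition_def by blast
  have "\<forall>k\<in>{0..m}. \<exists>j\<in>{1..N}. p k \<in> U j" using psph cover by blast
  then obtain J where J: "\<And>k. k \<in> {0..m} \<Longrightarrow> J k \<in> {1..N} \<and> p k \<in> U (J k)" by metis
  have inj: "inj_on J {0..m}"
  proof (rule inj_onI, rule ccontr)
    fix k l assume kl: "k \<in> {0..m}" "l \<in> {0..m}" "J k = J l" "k \<noteq> l"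
    let ?j = "J k"
    have j: "?j \<in> {1..N}" "p k \<in> U ?j" "p l \<in> U ?j" using J[OF kl(1)] J[OF kl(2)] kl(3) by auto
    have bd: "bounded (U ?j)" using pieces[OF j(1)] bounded_subset[OF bounded_sphere] by blast
    have "dist (p k) (p l) \<le> diameter (U ?j)" by (rule diameter_bounded_bound[OF bd j(2) j(3)])
    also have "\<dots> < 1 / real m" using pieces[OF j(1)] by blast
    finally have d: "norm (p k - p l) < 1 / real m" by (simp add: dist_norm)
    have "(p k - p l) \<bullet> b1 = a k - a l"
      unfolding p_def by (simp only: inner_diff_left inner_add_left inner_scaleR_left o11 o21 mult_1_right mult_zero_right add_0_right)
    then have "\<bar>a k - a l\<bar> \<le> norm (p k - p l)"
      using Cauchy_Schwarz_ineq2[of "p k - p l" b1] ne1 by simp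
    moreover have "\<bar>a k - a l\<bar> \<ge> 1 / real m"
    proof -
      have "\<bar>real k - real l\<bar> \<ge> 1" using kl(4) by linarith
      then have "\<bar>real k - real l\<bar> / real m \<ge> 1 / real m" using m by (intro divide_right_mono) auto
      moreover have "\<bar>a k - a l\<bar> = \<bar>real k - real l\<bar> / real m" unfolding a_def using m by (simp add: diff_divide_distrib[symmetric])
      ultimately show ?thesis by simp
    qed
    ultimately show False using d by linarith
  qed
  have "card {0..m} \<le> card {1..N}"
    by (rule card_inj_on_le[OF inj]) (use J in auto)
  then show ?thesis by simp
qed

definition slab :: "nat \<Rightarrow> (nat \<Rightarrow> real^'n) \<Rightarrow> nat \<Rightarrow> real \<Rightarrow> (real^'n) set" where
  "slab n e0 i \<rho> = sphere 0 1 \<inter> (\<Inter>l\<in>{Suc i..n}. {x. \<bar>x \<bullet> e0 l\<bar> \<le> \<rho>})"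

lemma slab_closed: "closed (slab n e0 i \<rho>)"
  unfolding slab_def
  by (intro closed_Int closed_sphere closed_INT ballI closed_Collect_le continuous_intros)

lemma slab_mono: "\<rho> \<le> \<rho>' \<Longrightarrow> slab n e0 i \<rho> \<subseteq> slab n e0 i \<rho>'"
proof
  fix x assume r: "\<rho> \<le> \<rho>'" and x: "x \<in> slab n e0 i \<rho>"
  have "\<bar>x \<bullet> e0 l\<bar> \<le> \<rho>" if "l \<in> {Suc i..n}" for l
    using that x unfolding slab_def by blast
  then have "\<bar>x \<bullet> e0 l\<bar> \<le> \<rho>'" if "l \<in> {Suc i..n}" for l
    using that r by force
  then show "x \<in> slab n e0 i \<rho>'" using x unfolding slab_def by auto
qed

lemma slab_Inter:
  fixes e0 :: "nat \<Rightarrow> real^'n"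
  assumes onf: "orthonormal_family CARD('n) e0" and i: "i \<le> CARD('n)"
  shows "(\<Inter>k. slab CARD('n) e0 i (1 / (real k + 1))) = span (e0 ` {1..i}) \<inter> sphere 0 1"
proof (intro equalityI subsetI)
  fix x assume x: "x \<in> (\<Inter>k. slab CARD('n) e0 i (1 / (real k + 1)))"
  then have xs: "x \<in> sphere 0 1" unfolding slab_def by auto
  have "x \<bullet> e0 l = 0" if l: "l \<in> {Suc i..CARD('n)}" for l
  proof (rule ccontr)
    assume ne: "x \<bullet> e0 l \<noteq> 0"
    then obtain k :: nat where k: "1 / (real k + 1) < \<bar>x \<bullet> e0 l\<bar>"
      using reals_Archimedean[of "\<bar>x \<bullet> e0 l\<bar>"] ne by (auto simp: inverse_eq_divide add.commute)
    have "x \<in> slab CARD('n) e0 i (1 / (real k + 1))" using x by blast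
    then have "\<bar>x \<bullet> e0 l\<bar> \<le> 1 / (real k + 1)" using l unfolding slab_def by blast
    with k show False by linarith
  qed
  then have "x \<in> span (e0 ` {1..i})" by (rule span_slice_mem[OF onf i])
  with xs show "x \<in> span (e0 ` {1..i}) \<inter> sphere 0 1" by blast
next
  fix x assume x: "x \<in> span (e0 ` {1..i}) \<inter> sphere 0 1"
  have "x \<bullet> e0 l = 0" if "l \<in> {Suc i..CARD('n)}" for l
    using span_slice_orth[OF onf _ that] x by blast
  then show "x \<in> (\<Inter>k. slab CARD('n) e0 i (1 / (real k + 1)))"
    using x unfolding slab_def by auto
qed

lemma slab_approx:
  fixes e0 :: "nat \<Rightarrow> real^'n" and \<mu> :: "(real^'n) measure"
  assumes onf: "orthonormal_family CARD('n) e0" and i: "i \<le> CARD('n)"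
    and fm: "finite_measure \<mu>" and sb: "sets \<mu> = sets borel" and eps: "\<epsilon> > 0"
  shows "\<exists>\<rho>>0. measure \<mu> (slab CARD('n) e0 i \<rho>) < measure \<mu> (span (e0 ` {1..i}) \<inter> sphere 0 1) + \<epsilon>"
proof -
  let ?A = "\<lambda>k::nat. slab CARD('n) e0 i (1 / (real k + 1))"
  have rng: "range ?A \<subseteq> sets \<mu>" using sb by (auto intro!: borel_closed slab_closed)
  have dec: "decseq ?A"
    by (rule decseq_SucI, rule slab_mono) (simp add: frac_le)
  have fin: "emeasure \<mu> (?A k) \<noteq> \<infinity>" for k using finite_measure.emeasure_finite[OF fm] by simp
  have "(\<lambda>k. measure \<mu> (?A k)) \<longlonglongrightarrow> measure \<mu> (\<Inter>k. ?A k)"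
    by (rule Lim_measure_decseq[OF rng dec fin])
  then have "(\<lambda>k. measure \<mu> (?A k)) \<longlonglongrightarrow> measure \<mu> (span (e0 ` {1..i}) \<inter> sphere 0 1)"
    unfolding slab_Inter[OF onf i] .
  then have "eventually (\<lambda>k. measure \<mu> (?A k) < measure \<mu> (span (e0 ` {1..i}) \<inter> sphere 0 1) + \<epsilon>) sequentially"
    using eps by (intro order_tendstoD(2)) auto
  then obtain k where "measure \<mu> (?A k) < measure \<mu> (span (e0 ` {1..i}) \<inter> sphere 0 1) + \<epsilon>"
    by (auto simp: eventually_sequentially)
  moreover have "1 / (real k + 1) > 0" by simp
  ultimately show ?thesis by blast
qed

lemma exists_big_coord:
  fixes e :: "nat \<Rightarrow> real^'n"
  assumes onf: "orthonormal_family CARD('n) e" and d: "real CARD('n) * \<delta>\<^sup>2 < 1" and dpos: "0 < \<delta>"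
    and x: "x \<in> sphere 0 1"
  shows "\<exists>l\<in>{1..CARD('n)}. \<delta> \<le> \<bar>x \<bullet> e l\<bar>"
proof (rule ccontr)
  assume "\<not> ?thesis"
  then have lt: "\<bar>x \<bullet> e l\<bar> < \<delta>" if "l \<in> {1..CARD('n)}" for l using that by force
  have "1 = (norm x)\<^sup>2" using x by simp
  also have "\<dots> = (\<Sum>l\<in>{1..CARD('n)}. (x \<bullet> e l)\<^sup>2)" by (rule onf_parseval[OF onf])
  also have "\<dots> < (\<Sum>l\<in>{1..CARD('n)}. \<delta>\<^sup>2)"
  proof (rule sum_strict_mono)
    show "finite {1..CARD('n)}" by simp
    show "{1..CARD('n)} \<noteq> {}" by simp
    fix l assume "l \<in> {1..CARD('n)}"
    then have "\<bar>x \<bullet> e l\<bar>\<^sup>2 < \<delta>\<^sup>2" using lt by (intro power_strict_mono) auto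
    then show "(x \<bullet> e l)\<^sup>2 < \<delta>\<^sup>2" by simp
  qed
  also have "\<dots> = real CARD('n) * \<delta>\<^sup>2" by simp
  finally show False using d by linarith
qed

lemma pointwise_bound:
  fixes e :: "nat \<Rightarrow> real^'n" and r :: "nat \<Rightarrow> real"
  assumes onf: "orthonormal_family CARD('n) e"
    and rpos: "\<And>i. i \<in> {1..CARD('n)} \<Longrightarrow> 0 < r i"
    and d: "real CARD('n) * \<delta>\<^sup>2 < 1" and dpos: "0 < \<delta>"
    and x: "x \<in> sphere 0 1"
  shows "ln \<delta> + ln (r 1) + (\<Sum>i\<in>{1..<CARD('n)}. (ln (r (Suc i)) - ln (r i)) *
            (if \<exists>l\<in>{Suc i..CARD('n)}. \<delta> \<le> \<bar>x \<bullet> e l\<bar> then 1 else 0))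
         \<le> ln (support_fun (ellipsoid CARD('n) e r) x)"
proof -
  let ?n = "CARD('n)"
  let ?L = "{l\<in>{1..?n}. \<delta> \<le> \<bar>x \<bullet> e l\<bar>}"
  have Lne: "?L \<noteq> {}" using exists_big_coord[OF onf d dpos x] by blast
  have Lfin: "finite ?L" by simp
  define j where "j = Max ?L"
  have jL: "j \<in> ?L" unfolding j_def using Lne Lfin by (rule Max_in[rotated])
  have jmax: "l \<le> j" if "l \<in> ?L" for l unfolding j_def using Lfin that by (rule Max_ge)
  have j1: "1 \<le> j" "j \<le> ?n" using jL by auto
  have ind: "(\<exists>l\<in>{Suc i..?n}. \<delta> \<le> \<bar>x \<bullet> e l\<bar>) \<longleftrightarrow> i < j" if i: "i \<in> {1..<?n}" for i
  proof
    assume "\<exists>l\<in>{Suc i..?n}. \<delta> \<le> \<bar>x \<bullet> e l\<bar>"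
    then obtain l where l: "l \<in> {Suc i..?n}" "\<delta> \<le> \<bar>x \<bullet> e l\<bar>" by blast
    then have "l \<in> ?L" by auto
    then have "l \<le> j" by (rule jmax)
    then show "i < j" using l by auto
  next
    assume "i < j"
    then show "\<exists>l\<in>{Suc i..?n}. \<delta> \<le> \<bar>x \<bullet> e l\<bar>" using jL by (intro bexI[of _ j]) auto
  qed
  have "(\<Sum>i\<in>{1..<?n}. (ln (r (Suc i)) - ln (r i)) *
            (if \<exists>l\<in>{Suc i..?n}. \<delta> \<le> \<bar>x \<bullet> e l\<bar> then 1 else 0))
       = (\<Sum>i\<in>{1..<?n}. if i \<in> {1..<j} then ln (r (Suc i)) - ln (r i) else 0)"
    by (rule sum.cong) (auto simp: ind)
  also have "\<dots> = (\<Sum>i\<in>{1..<?n} \<inter> {1..<j}. ln (r (Suc i)) - ln (r i))"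
    by (rule sum.inter_restrict[symmetric]) simp
  also have "{1..<?n} \<inter> {1..<j} = {1..<j}" using j1 by auto
  also have "(\<Sum>i\<in>{1..<j}. ln (r (Suc i)) - ln (r i)) = ln (r j) - ln (r 1)"
    by (rule sum_Suc_diff') (use j1 in auto)
  finally have S: "(\<Sum>i\<in>{1..<?n}. (ln (r (Suc i)) - ln (r i)) *
            (if \<exists>l\<in>{Suc i..?n}. \<delta> \<le> \<bar>x \<bullet> e l\<bar> then 1 else 0)) = ln (r j) - ln (r 1)" .
  have rj: "0 < r j" using rpos j1 by auto
  have "r j * \<delta> \<le> r j * \<bar>x \<bullet> e j\<bar>" using jL rj by (intro mult_left_mono) auto
  also have "\<dots> \<le> support_fun (ellipsoid ?n e r) x" by (rule supp_lower[OF onf rpos]) (use j1 in auto)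
  finally have h: "r j * \<delta> \<le> support_fun (ellipsoid ?n e r) x" .
  have "ln \<delta> + ln (r j) = ln (r j * \<delta>)" using rj dpos by (simp add: ln_mult)
  also have "\<dots> \<le> ln (support_fun (ellipsoid ?n e r) x)"
    using h rj dpos by (subst ln_le_cancel_iff) (auto intro: order_less_le_trans[OF _ h])
  finally show ?thesis unfolding S by simp
qed

lemma supp_pos:
  fixes e :: "nat \<Rightarrow> real^'n" and r :: "nat \<Rightarrow> real"
  assumes onf: "orthonormal_family CARD('n) e"
    and rpos: "\<And>i. i \<in> {1..CARD('n)} \<Longrightarrow> 0 < r i"
    and x: "x \<in> sphere 0 1"
  shows "0 < support_fun (ellipsoid CARD('n) e r) x"
proof -
  define \<delta> :: real where "\<delta> = 1 / (real CARD('n) + 1)"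
  have dpos: "0 < \<delta>" unfolding \<delta>_def by simp
  have d1: "\<delta> < 1" unfolding \<delta>_def by simp
  have "real CARD('n) * \<delta>\<^sup>2 \<le> real CARD('n) * \<delta>"
    using dpos d1 by (intro mult_left_mono) (auto simp: power2_eq_square)
  also have "\<dots> < 1" unfolding \<delta>_def by (simp add: field_simps)
  finally have d: "real CARD('n) * \<delta>\<^sup>2 < 1" .
  obtain l where l: "l \<in> {1..CARD('n)}" "\<delta> \<le> \<bar>x \<bullet> e l\<bar>" using exists_big_coord[OF onf d dpos x] by blast
  have "0 < r l * \<delta>" using rpos[OF l(1)] dpos by simp
  also have "\<dots> \<le> r l * \<bar>x \<bullet> e l\<bar>" using l rpos[OF l(1)] by (intro mult_left_mono) auto
  also have "\<dots> \<le> support_fun (ellipsoid CARD('n) e r) x" by (rule supp_lower[OF onf rpos l(1)])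
  finally show ?thesis .
qed

theorem lemma5p11:
  fixes \<mu> :: "(real^'n) measure"
    and q :: real
    and N :: "nat \<Rightarrow> nat"
    and U :: "nat \<Rightarrow> nat \<Rightarrow> (real^'n) set"
    and v :: "nat \<Rightarrow> nat \<Rightarrow> real^'n"
    and e :: "nat \<Rightarrow> nat \<Rightarrow> real^'n"
    and e0 :: "nat \<Rightarrow> real^'n"
    and r :: "nat \<Rightarrow> nat \<Rightarrow> real"
  defines "n \<equiv> CARD('n)"
  assumes q: "1 < q" "q < real n + 1"
    and \<mu>_borel: "sets \<mu> = sets borel"
    and \<mu>_finite: "finite_measure \<mu>"
    and \<mu>_sphere: "emeasure \<mu> (- sphere 0 1) = 0"
    and \<mu>_nonzero: "total_mass \<mu> \<noteq> 0"
    and partition: "\<And>m. m \<ge> 1 \<Longrightarrow> sphere_partition m (N m) (U m)"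
    and pts: "\<And>m i. m \<ge> 1 \<Longrightarrow> i \<in> {1..N m} \<Longrightarrow> v m i \<in> U m i"
    and genpos: "\<And>m. m \<ge> 1 \<Longrightarrow> general_position n {1..N m} (v m)"
    and onb: "\<And>m. m \<ge> 1 \<Longrightarrow> orthonormal_family n (e m)"
    and r_pos: "\<And>m. m \<ge> 1 \<Longrightarrow> 0 < r m 1"
    and r_mono: "\<And>m i. m \<ge> 1 \<Longrightarrow> 1 \<le> i \<Longrightarrow> i < n \<Longrightarrow> r m i \<le> r m (Suc i)"
    and r_n: "\<And>m. m \<ge> 1 \<Longrightarrow> r m n \<ge> 1"
    and e_lim: "\<And>i. i \<in> {1..n} \<Longrightarrow> (\<lambda>m. e m i) \<longlonglongrightarrow> e0 i"
    and e0_onb: "orthonormal_family n e0"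
    and subspace_cond: "\<And>\<xi> i. i \<in> {1..n-1} \<Longrightarrow> subspace \<xi> \<Longrightarrow> dim \<xi> = i \<Longrightarrow>
          measure \<mu> (\<xi> \<inter> sphere 0 1) / total_mass \<mu>
            < (real i + min (real i) (q - 1)) / (real n + q - 1)"
  shows "\<exists>\<delta>0 t0 N0::real. 0 < \<delta>0 \<and> \<delta>0 < 1 \<and> 0 < t0 \<and> t0 < 1 \<and> 0 < N0 \<and>
     (\<forall>m::nat. real m > N0 \<longrightarrow>
        (let \<nu> = approx_measure_normalized \<mu> (N m) (U m) (v m);
             E = ellipsoid n (e m) (r m);
             k = nat \<lfloor>q\<rfloor>
         in (1 / total_mass \<nu>) * (LINT x : sphere 0 1 | \<nu>. ln (support_fun E x))
            \<ge> ln (\<delta>0 / 2) + t0 * ln (r m n)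
              + (1 - t0) * ((\<Sum>i\<in>{1..k-1}. 2 / (real n + q - 1) * ln (r m i))
                  + (q - real k + 1) / (real n + q - 1) * ln (r m k)
                  + (\<Sum>i\<in>{k+1..n}. 1 / (real n + q - 1) * ln (r m i)))))"
proof -
  have n1: "1 \<le> n" unfolding n_def by simp
  have spmu: "space \<mu> = UNIV" using sets_eq_imp_space_eq[OF \<mu>_borel] by simp
  have Sb: "sphere 0 1 \<in> sets \<mu>" using \<mu>_borel by simp
  define P where "P = total_mass \<mu>"
  have PS: "measure \<mu> (sphere 0 1) = P"
  proof -
    have "measure \<mu> (- sphere 0 1) = 0" using \<mu>_sphere by (simp add: measure_def)
    moreover have "measure \<mu> (space \<mu> - sphere 0 1) = measure \<mu> (space \<mu>) - measure \<mu> (sphere 0 1)"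
      by (rule finite_measure.finite_measure_compl[OF \<mu>_finite Sb])
    ultimately show ?thesis unfolding P_def total_mass_def spmu by (simp add: Compl_eq_Diff_UNIV)
  qed
  have Ppos: "P > 0" using \<mu>_nonzero measure_nonneg[of \<mu> "space \<mu>"] unfolding P_def total_mass_def by linarith
  define W where "W i = (real i + min (real i) (q - 1)) / (real n + q - 1)" for i :: nat
  define a where "a i = measure \<mu> (span (e0 ` {1..i}) \<inter> sphere 0 1) / P" for i :: nat
  have onf0: "orthonormal_family CARD('n) e0" using e0_onb unfolding n_def .
  have aW: "a i < W i" if i: "i \<in> {1..<n}" for i
  proof -
    have "dim (span (e0 ` {1..i})) = i" using span_slice_dim[OF e0_onb, of i] i by simp
    then show ?thesis unfolding a_def W_def P_def using i
      by (intro subspace_cond) (auto simp: subspace_span)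
  qed
  have W1: "W i < 1" if i: "i \<in> {1..<n}" for i
  proof -
    have "real i + min (real i) (q - 1) < real n + q - 1" using i by (auto simp: min_def)
    moreover have "real n + q - 1 > 0" using q by simp
    ultimately show ?thesis unfolding W_def by simp
  qed
  define g where "g = Min (insert 1 ((\<lambda>i. W i - a i) ` {1..<n}))"
  have gpos: "g > 0" unfolding g_def using aW by (subst Min_gr_iff) auto
  have g1: "g \<le> 1" unfolding g_def by (rule Min_le) auto
  have gW: "g \<le> W i - a i" if "i \<in> {1..<n}" for i unfolding g_def by (rule Min_le) (use that in auto)
  have "\<forall>i\<in>{1..<n}. \<exists>\<rho>>0. measure \<mu> (slab CARD('n) e0 i \<rho>) < measure \<mu> (span (e0 ` {1..i}) \<inter> sphere 0 1) + P * g / 4"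
    using slab_approx[OF onf0 _ \<mu>_finite \<mu>_borel] Ppos gpos unfolding n_def by auto
  then obtain R where R: "\<And>i. i \<in> {1..<n} \<Longrightarrow> R i > 0 \<and> measure \<mu> (slab CARD('n) e0 i (R i)) < measure \<mu> (span (e0 ` {1..i}) \<inter> sphere 0 1) + P * g / 4"
    by metis
  define \<rho> where "\<rho> = Min (insert 1 (R ` {1..<n}))"
  have \<rho>pos: "\<rho> > 0" unfolding \<rho>_def using R by (subst Min_gr_iff) auto
  have \<rho>1: "\<rho> \<le> 1" unfolding \<rho>_def by (rule Min_le) auto
  have \<rho>R: "\<rho> \<le> R i" if "i \<in> {1..<n}" for i unfolding \<rho>_def by (rule Min_le) (use that in auto)
  have slabb: "measure \<mu> (slab CARD('n) e0 i \<rho>) < P * a i + P * g / 4" if i: "i \<in> {1..<n}" for i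
  proof -
    have "measure \<mu> (slab CARD('n) e0 i \<rho>) \<le> measure \<mu> (slab CARD('n) e0 i (R i))"
      using \<rho>R[OF i] \<mu>_borel
      by (intro finite_measure.finite_measure_mono[OF \<mu>_finite] slab_mono) (auto intro!: borel_closed slab_closed)
    also have "\<dots> < measure \<mu> (span (e0 ` {1..i}) \<inter> sphere 0 1) + P * g / 4" using R[OF i] by blast
    finally show ?thesis unfolding a_def using Ppos by simp
  qed
  define \<delta> where "\<delta> = min (\<rho> / 3) (1 / (real n + 1))"
  have \<delta>pos: "\<delta> > 0" unfolding \<delta>_def using \<rho>pos by simp
  have \<delta>1: "\<delta> < 1" unfolding \<delta>_def using n1 \<rho>1 by (simp add: min_def field_simps)
  have \<delta>\<rho>: "\<delta> \<le> \<rho> / 3" unfolding \<delta>_def by simp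
  have \<delta>n: "real CARD('n) * \<delta>\<^sup>2 < 1"
  proof -
    have "real n * \<delta>\<^sup>2 \<le> real n * \<delta>"
      using \<delta>pos \<delta>1 by (intro mult_left_mono) (auto simp: power2_eq_square)
    also have "\<dots> \<le> real n * (1 / (real n + 1))" unfolding \<delta>_def by (intro mult_left_mono) auto
    also have "\<dots> < 1" by (simp add: field_simps)
    finally show ?thesis unfolding n_def .
  qed
  define t0 where "t0 = g / 4"
  have t0: "0 < t0" "t0 < 1" unfolding t0_def using gpos g1 by auto
  have "eventually (\<lambda>m. \<forall>l\<in>{1..n}. dist (e m l) (e0 l) < \<rho> / 3) sequentially"
  proof (intro eventually_ball_finite ballI)
    fix l assume "l \<in> {1..n}"
    then have "(\<lambda>m. e m l) \<longlonglongrightarrow> e0 l" by (rule e_lim)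
    moreover have "\<rho> / 3 > 0" using \<rho>pos by simp
    ultimately show "eventually (\<lambda>m. dist (e m l) (e0 l) < \<rho> / 3) sequentially"
      unfolding tendsto_iff by blast
  qed simp
  then obtain M1 where M1: "\<And>m. m \<ge> M1 \<Longrightarrow> \<forall>l\<in>{1..n}. dist (e m l) (e0 l) < \<rho> / 3"
    by (auto simp: eventually_sequentially)
  define N0 where "N0 = real M1 + 3 / \<rho> + 4 / (P * g) + 1"
  have N0pos: "N0 > 0"
  proof -
    have "3 / \<rho> > 0" "4 / (P * g) > 0" using \<rho>pos Ppos gpos by auto
    then show ?thesis unfolding N0_def by linarith
  qed
  have main: "\<forall>m::nat. real m > N0 \<longrightarrow>
        (let \<nu> = approx_measure_normalized \<mu> (N m) (U m) (v m);
             E = ellipsoid n (e m) (r m);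
             k = nat \<lfloor>q\<rfloor>
         in (1 / total_mass \<nu>) * (LINT x : sphere 0 1 | \<nu>. ln (support_fun E x))
            \<ge> ln (\<delta> / 2) + t0 * ln (r m n)
              + (1 - t0) * ((\<Sum>i\<in>{1..k-1}. 2 / (real n + q - 1) * ln (r m i))
                  + (q - real k + 1) / (real n + q - 1) * ln (r m k)
                  + (\<Sum>i\<in>{k+1..n}. 1 / (real n + q - 1) * ln (r m i))))"
  proof (intro allI impI)
    fix m :: nat assume mN0: "real m > N0"
    have m1: "m \<ge> 1" and mM1: "m \<ge> M1" and m3: "1 / real m < \<rho> / 3" and mPg: "1 / real m < P * g / 4"
    proof -
      have a1: "3 / \<rho> > 0" "4 / (P * g) > 0" using \<rho>pos Ppos gpos by auto
      then have b: "real m > 3 / \<rho>" "real m > 4 / (P * g)" "real m > real M1" "real m > 0"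
        using mN0 unfolding N0_def by linarith+
      show "m \<ge> 1" using b(4) by simp
      show "m \<ge> M1" using b(3) by simp
      show "1 / real m < \<rho> / 3" using b(1) b(4) \<rho>pos by (simp add: field_simps)
      show "1 / real m < P * g / 4" using b(2) b(4) Ppos gpos by (simp add: field_simps)
    qed
    have mpos: "real m > 0" using m1 by simp
    let ?Nm = "N m"
    have part: "sphere_partition m ?Nm (U m)" by (rule partition[OF m1])
    have Ub: "\<And>j. j \<in> {1..?Nm} \<Longrightarrow> U m j \<in> sets borel \<and> U m j \<subseteq> sphere 0 1 \<and> diameter (U m j) < 1 / real m"
      using part unfolding sphere_partition_def by blast
    have Udisj: "\<And>j j'. j \<in> {1..?Nm} \<Longrightarrow> j' \<in> {1..?Nm} \<Longrightarrow> j \<noteq> j' \<Longrightarrow> U m j \<inter> U m j' = {}"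
      using part unfolding sphere_partition_def by blast
    have Ucov: "(\<Union>j\<in>{1..?Nm}. U m j) = sphere 0 1"
      using part unfolding sphere_partition_def by blast
    have rpos: "0 < r m i" if "i \<in> {1..CARD('n)}" for i
    proof -
      have "\<forall>i. 1 \<le> i \<longrightarrow> i \<le> n \<longrightarrow> 0 < r m i"
      proof
        fix i show "1 \<le> i \<longrightarrow> i \<le> n \<longrightarrow> 0 < r m i"
        proof (induction i)
          case 0 then show ?case by simp
        next
          case (Suc i)
          show ?case
          proof (cases "i = 0")
            case True then show ?thesis using r_pos[OF m1] by simp
          next
            case False
            then show ?thesis using Suc.IH r_mono[OF m1, of i] by force
          qed
        qed
      qed
      then show ?thesis using that unfolding n_def by auto
    qed
    have onfm: "orthonormal_family CARD('n) (e m)" using onb[OF m1] unfolding n_def .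
    have vS: "v m j \<in> sphere 0 1" if "j \<in> {1..?Nm}" for j using pts[OF m1 that] Ub[OF that] by blast
    have Nm1: "?Nm \<ge> 1"
    proof -
      have "norm (e0 1) = 1" using onf_val[OF e0_onb, of 1 1] n1 by (simp add: norm_eq_sqrt_inner)
      then have "e0 1 \<in> sphere 0 1" by simp
      then obtain j where "j \<in> {1..?Nm}" using Ucov by blast
      then show ?thesis by simp
    qed
    define w where "w j = measure \<mu> (U m j) + 1 / (real ?Nm)\<^sup>2" for j
    have wnn: "0 \<le> w j" for j unfolding w_def by simp
    have Umeas: "U m j \<in> sets \<mu>" if "j \<in> {1..?Nm}" for j using Ub[OF that] \<mu>_borel by simp
    have fin\<mu>: "emeasure \<mu> A \<noteq> \<infinity>" for A using finite_measure.emeasure_finite[OF \<mu>_finite] by simp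
    have UnionM: "measure \<mu> (\<Union>j\<in>J. U m j) = (\<Sum>j\<in>J. measure \<mu> (U m j))" if J: "J \<subseteq> {1..?Nm}" for J
    proof (rule measure_finite_Union)
      show "finite J" using J finite_subset by blast
      show "U m ` J \<subseteq> sets \<mu>" using J Umeas by blast
      show "disjoint_family_on (U m) J" using J Udisj unfolding disjoint_family_on_def by blast
    qed (rule fin\<mu>)
    have sumU: "(\<Sum>j\<in>{1..?Nm}. measure \<mu> (U m j)) = P"
      using UnionM[of "{1..?Nm}"] Ucov PS by simp
    define Q where "Q = (\<Sum>j\<in>{1..?Nm}. w j)"
    have Qeq: "Q = P + 1 / real ?Nm"
    proof -
      have "Q = (\<Sum>j\<in>{1..?Nm}. measure \<mu> (U m j)) + real ?Nm * (1 / (real ?Nm)\<^sup>2)"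
        unfolding Q_def w_def by (simp add: sum.distrib)
      also have "\<dots> = P + 1 / real ?Nm" unfolding sumU using Nm1 by (simp add: power2_eq_square)
      finally show ?thesis .
    qed
    have QP: "P \<le> Q" "0 < Q"
    proof -
      have "0 \<le> 1 / real ?Nm" by simp
      then show "P \<le> Q" "0 < Q" using Qeq Ppos by linarith+
    qed
    have AM: "approx_measure \<mu> ?Nm (U m) (v m) = distr (point_measure {1..?Nm} (\<lambda>j. ennreal (w j))) borel (v m)"
      unfolding approx_measure_def discrete_eq_distr w_def ..
    have tmA: "total_mass (approx_measure \<mu> ?Nm (U m) (v m)) = Q"
      unfolding AM total_mass_def Q_def using measure_distr_pm[of UNIV ?Nm w "v m"] wnn by simp
    define c where "c = P / Q"
    have c01: "0 \<le> c" "c \<le> 1" unfolding c_def using QP Ppos by auto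
    define p where "p j = c * w j" for j
    have pnn: "0 \<le> p j" for j unfolding p_def using c01 wnn by simp
    have NU: "approx_measure_normalized \<mu> ?Nm (U m) (v m) = distr (point_measure {1..?Nm} (\<lambda>j. ennreal (p j))) borel (v m)"
      unfolding approx_measure_normalized_def tmA P_def[symmetric] c_def[symmetric] unfolding AM p_def
      by (rule scale_distr) (use c01 wnn in auto)
    have sump: "(\<Sum>j\<in>{1..?Nm}. p j) = P"
    proof -
      have "(\<Sum>j\<in>{1..?Nm}. p j) = c * Q" unfolding p_def Q_def by (rule sum_distrib_left[symmetric])
      then show ?thesis unfolding c_def using QP by simp
    qed
    have tmN: "total_mass (approx_measure_normalized \<mu> ?Nm (U m) (v m)) = P"
      unfolding NU total_mass_def using measure_distr_pm[of UNIV ?Nm p "v m"] pnn sump by simp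
    let ?h = "support_fun (ellipsoid CARD('n) (e m) (r m))"
    have hpos: "0 < ?h x" if "x \<in> sphere 0 1" for x by (rule supp_pos[OF onfm rpos that])
    have cont: "continuous_on (sphere 0 1) (\<lambda>x. ln (?h x))"
    proof (rule continuous_on_ln)
      show "continuous_on (sphere 0 1) ?h" by (rule continuous_on_subset[OF supp_cont[OF onfm rpos]]) auto
      show "\<forall>x\<in>sphere 0 1. ?h x \<noteq> 0" using hpos by (metis less_irrefl)
    qed
    have meas: "(\<lambda>x. indicator (sphere 0 1) x *\<^sub>R ln (?h x)) \<in> borel_measurable borel"
      by (rule borel_measurable_continuous_on_indicator[OF _ cont]) simp
    have INT: "(LINT x : sphere 0 1 | approx_measure_normalized \<mu> ?Nm (U m) (v m). ln (?h x))
             = (\<Sum>j\<in>{1..?Nm}. p j * ln (?h (v m j)))"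
      unfolding set_lebesgue_integral_def NU int_distr_pm[OF meas pnn]
    proof (rule sum.cong)
      fix j assume "j \<in> {1..?Nm}"
      then have "v m j \<in> sphere 0 1" by (rule vS)
      then show "p j * (indicator (sphere 0 1) (v m j) *\<^sub>R ln (?h (v m j))) = p j * ln (?h (v m j))" by simp
    qed simp
    define ind where "ind i x = (if \<exists>l\<in>{Suc i..CARD('n)}. \<delta> \<le> \<bar>x \<bullet> e m l\<bar> then 1 else (0::real))" for i x
    define lam where "lam i = ln (r m i)" for i
    define cd where "cd i = lam (Suc i) - lam i" for i
    have cdnn: "0 \<le> cd i" if "i \<in> {1..<n}" for i
    proof -
      have "r m i \<le> r m (Suc i)" using r_mono[OF m1, of i] that by auto
      moreover have "0 < r m i" using rpos[of i] that unfolding n_def by auto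
      ultimately show ?thesis unfolding cd_def lam_def by simp
    qed
    have PW: "ln \<delta> + lam 1 + (\<Sum>i\<in>{1..<n}. cd i * ind i (v m j)) \<le> ln (?h (v m j))" if "j \<in> {1..?Nm}" for j
      using pointwise_bound[OF onfm rpos \<delta>n \<delta>pos vS[OF that]]
      unfolding ind_def cd_def lam_def n_def .
    define F where "F i = (\<Sum>j\<in>{1..?Nm}. p j * ind i (v m j))" for i
    have Gb: "P - F i \<le> P * ((1 - t0) * W i)" if i: "i \<in> {1..<n}" for i
    proof -
      have n2: "CARD('n) \<ge> 2" using i unfolding n_def by auto
      have NmL: "m + 1 \<le> ?Nm" by (rule partition_card[OF onf0 n2 m1 part])
      define J where "J = {j\<in>{1..?Nm}. \<not> (\<exists>l\<in>{Suc i..CARD('n)}. \<delta> \<le> \<bar>v m j \<bullet> e m l\<bar>)}"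
      have Jsub: "J \<subseteq> {1..?Nm}" unfolding J_def by auto
      have PF: "P - F i = (\<Sum>j\<in>J. p j)"
      proof -
        have "P - F i = (\<Sum>j\<in>{1..?Nm}. p j * (1 - ind i (v m j)))"
          unfolding F_def sump[symmetric] by (simp add: sum_subtractf algebra_simps)
        also have "\<dots> = (\<Sum>j\<in>{1..?Nm}. if j \<in> J then p j else 0)"
          by (rule sum.cong) (auto simp: J_def ind_def)
        also have "\<dots> = (\<Sum>j\<in>{1..?Nm} \<inter> J. p j)"
          by (rule sum.inter_restrict[symmetric]) simp
        also have "{1..?Nm} \<inter> J = J" using Jsub by auto
        finally show ?thesis .
      qed
      have pw: "(\<Sum>j\<in>J. p j) \<le> (\<Sum>j\<in>J. w j)"
      proof (rule sum_mono)
        fix j show "p j \<le> w j" unfolding p_def using c01 wnn[of j] by (intro mult_left_le_one_le) auto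
      qed
      have wsplit: "(\<Sum>j\<in>J. w j) = (\<Sum>j\<in>J. measure \<mu> (U m j)) + real (card J) * (1 / (real ?Nm)\<^sup>2)"
        unfolding w_def by (simp add: sum.distrib)
      have cardJ: "card J \<le> ?Nm" using card_mono[OF _ Jsub] by simp
      have c1: "real (card J) * (1 / (real ?Nm)\<^sup>2) \<le> real ?Nm * (1 / (real ?Nm)\<^sup>2)"
        using cardJ by (intro mult_right_mono) auto
      have c2: "real ?Nm * (1 / (real ?Nm)\<^sup>2) = 1 / real ?Nm" using Nm1 by (simp add: power2_eq_square)
      have c3: "1 / real ?Nm \<le> 1 / (real m + 1)"
        using NmL mpos by (intro divide_left_mono) auto
      have c4: "1 / (real m + 1) < 1 / real m" using mpos by (simp add: field_simps)
      have UJ: "(\<Sum>j\<in>J. measure \<mu> (U m j)) = measure \<mu> (\<Union>j\<in>J. U m j)" using UnionM[OF Jsub] by simp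
      have Jslab: "(\<Union>j\<in>J. U m j) \<subseteq> slab CARD('n) e0 i \<rho>"
      proof
        fix y assume "y \<in> (\<Union>j\<in>J. U m j)"
        then obtain j where j: "j \<in> J" "y \<in> U m j" by blast
        have jN: "j \<in> {1..?Nm}" using j Jsub by blast
        have Uj: "U m j \<subseteq> sphere 0 1" "diameter (U m j) < 1 / real m" using Ub[OF jN] by auto
        have vU: "v m j \<in> U m j" by (rule pts[OF m1 jN])
        have nv: "norm (v m j) = 1" using vU Uj by auto
        have ysph: "y \<in> sphere 0 1" using j Uj by auto
        have bd: "bounded (U m j)" using Uj bounded_subset[OF bounded_sphere] by blast
        have hd: "norm (y - v m j) < 1 / real m"
        proof -
          have "dist y (v m j) \<le> diameter (U m j)" by (rule diameter_bounded_bound[OF bd j(2) vU])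
          then show ?thesis using Uj by (simp add: dist_norm)
        qed
        have "\<bar>y \<bullet> e0 l\<bar> \<le> \<rho>" if l: "l \<in> {Suc i..CARD('n)}" for l
        proof -
          have ln': "l \<in> {1..n}" using l unfolding n_def by auto
          have "\<not> \<delta> \<le> \<bar>v m j \<bullet> e m l\<bar>" using j(1) l unfolding J_def by blast
          then have hv: "\<bar>v m j \<bullet> e m l\<bar> < \<delta>" by simp
          have ne0: "norm (e0 l) = 1" using onf_val[OF e0_onb ln' ln'] by (simp add: norm_eq_sqrt_inner)
          have he: "dist (e m l) (e0 l) < \<rho> / 3" using M1[OF mM1] ln' by blast
          have a1: "\<bar>(y - v m j) \<bullet> e0 l\<bar> \<le> norm (y - v m j)"
            using Cauchy_Schwarz_ineq2[of "y - v m j" "e0 l"] ne0 by simp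
          have a2: "\<bar>v m j \<bullet> (e0 l - e m l)\<bar> \<le> dist (e m l) (e0 l)"
            using Cauchy_Schwarz_ineq2[of "v m j" "e0 l - e m l"] nv by (simp add: dist_norm norm_minus_commute)
          have eq: "y \<bullet> e0 l = (y - v m j) \<bullet> e0 l + v m j \<bullet> (e0 l - e m l) + v m j \<bullet> e m l"
            by (simp add: inner_diff_left inner_diff_right)
          have "\<bar>y \<bullet> e0 l\<bar> \<le> \<bar>(y - v m j) \<bullet> e0 l\<bar> + \<bar>v m j \<bullet> (e0 l - e m l)\<bar> + \<bar>v m j \<bullet> e m l\<bar>"
            unfolding eq by linarith
          then show ?thesis using a1 a2 hv he hd m3 \<delta>\<rho> by linarith
        qed
        then show "y \<in> slab CARD('n) e0 i \<rho>" using ysph unfolding slab_def by blast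
      qed
      have slabm: "slab CARD('n) e0 i \<rho> \<in> sets \<mu>" using \<mu>_borel by (auto intro!: borel_closed slab_closed)
      have m5: "measure \<mu> (\<Union>j\<in>J. U m j) \<le> measure \<mu> (slab CARD('n) e0 i \<rho>)"
        by (rule finite_measure.finite_measure_mono[OF \<mu>_finite Jslab slabm])
      have sl: "measure \<mu> (slab CARD('n) e0 i \<rho>) < P * a i + P * g / 4" by (rule slabb[OF i])
      have g5: "P * g \<le> P * W i - P * a i"
        using mult_left_mono[OF gW[OF i], of P] Ppos by (simp add: algebra_simps)
      have t5: "P * t0 * W i \<le> P * t0" using W1[OF i] Ppos t0 by (intro mult_left_le) auto
      have t6: "P * t0 = P * g / 4" unfolding t0_def by simp
      have t7: "P * ((1 - t0) * W i) = P * W i - P * t0 * W i" by (simp add: algebra_simps)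
      have pg0: "0 \<le> P * g" using Ppos gpos by simp
      show ?thesis
        using pg0 PF pw wsplit c1 c2 c3 c4 mPg UJ m5 sl g5 t5 t6 t7 by linarith
    qed
    define A where "A = ln \<delta> + lam 1"
    define D where "D = (\<Sum>i\<in>{1..<n}. W i * cd i)"
    have X1: "(\<Sum>j\<in>{1..?Nm}. p j * (A + (\<Sum>i\<in>{1..<n}. cd i * ind i (v m j))))
          \<le> (\<Sum>j\<in>{1..?Nm}. p j * ln (?h (v m j)))"
      unfolding A_def by (rule sum_mono, rule mult_left_mono[OF PW pnn])
    have X2: "(\<Sum>j\<in>{1..?Nm}. p j * (A + (\<Sum>i\<in>{1..<n}. cd i * ind i (v m j))))
          = P * A + (\<Sum>i\<in>{1..<n}. cd i * F i)"
    proof -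
      have "(\<Sum>j\<in>{1..?Nm}. p j * (A + (\<Sum>i\<in>{1..<n}. cd i * ind i (v m j))))
          = (\<Sum>j\<in>{1..?Nm}. p j * A + p j * (\<Sum>i\<in>{1..<n}. cd i * ind i (v m j)))"
        by (simp only: distrib_left)
      also have "\<dots> = (\<Sum>j\<in>{1..?Nm}. p j) * A + (\<Sum>j\<in>{1..?Nm}. p j * (\<Sum>i\<in>{1..<n}. cd i * ind i (v m j)))"
        by (simp only: sum.distrib sum_distrib_right)
      also have "(\<Sum>j\<in>{1..?Nm}. p j * (\<Sum>i\<in>{1..<n}. cd i * ind i (v m j)))
           = (\<Sum>j\<in>{1..?Nm}. \<Sum>i\<in>{1..<n}. cd i * (p j * ind i (v m j)))"
        by (simp only: sum_distrib_left mult.left_commute)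
      also have "\<dots> = (\<Sum>i\<in>{1..<n}. \<Sum>j\<in>{1..?Nm}. cd i * (p j * ind i (v m j)))"
        by (rule sum.swap)
      also have "\<dots> = (\<Sum>i\<in>{1..<n}. cd i * F i)"
        unfolding F_def by (simp only: sum_distrib_left)
      finally show ?thesis unfolding sump by simp
    qed
    have X3: "(\<Sum>i\<in>{1..<n}. cd i * (P * (1 - (1 - t0) * W i))) \<le> (\<Sum>i\<in>{1..<n}. cd i * F i)"
    proof (rule sum_mono)
      fix i assume i: "i \<in> {1..<n}"
      have "P * (1 - (1 - t0) * W i) \<le> F i" using Gb[OF i] by (simp add: algebra_simps)
      then show "cd i * (P * (1 - (1 - t0) * W i)) \<le> cd i * F i" by (rule mult_left_mono) (rule cdnn[OF i])
    qed
    have X4: "(\<Sum>i\<in>{1..<n}. cd i * (P * (1 - (1 - t0) * W i)))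
          = P * ((\<Sum>i\<in>{1..<n}. cd i) - (1 - t0) * D)"
      unfolding D_def by (simp add: algebra_simps sum_distrib_left sum_subtractf sum.distrib)
    have tel: "(\<Sum>i\<in>{1..<n}. cd i) = lam n - lam 1"
      unfolding cd_def by (rule sum_Suc_diff') (use n1 in auto)
    have X5: "P * (ln \<delta> + lam n - (1 - t0) * D) = P * A + P * ((lam n - lam 1) - (1 - t0) * D)"
      unfolding A_def by (simp add: algebra_simps)
    have LB: "P * (ln \<delta> + lam n - (1 - t0) * D) \<le> (\<Sum>j\<in>{1..?Nm}. p j * ln (?h (v m j)))"
      using X1 X2 X3 X4[unfolded tel] X5 by linarith
    have BR: "(\<Sum>i\<in>{1..nat \<lfloor>q\<rfloor>-1}. 2 / (real n + q - 1) * ln (r m i))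
                  + (q - real (nat \<lfloor>q\<rfloor>) + 1) / (real n + q - 1) * ln (r m (nat \<lfloor>q\<rfloor>))
                  + (\<Sum>i\<in>{nat \<lfloor>q\<rfloor>+1..n}. 1 / (real n + q - 1) * ln (r m i))
             = lam n - D"
      using bracket_eq[OF q, of "\<lambda>i. ln (r m i)"] unfolding D_def W_def cd_def lam_def by simp
    have ld: "ln (\<delta> / 2) \<le> ln \<delta>" using \<delta>pos by simp
    have "ln (\<delta> / 2) + t0 * lam n + (1 - t0) * (lam n - D)
         \<le> (1 / P) * (\<Sum>j\<in>{1..?Nm}. p j * ln (?h (v m j)))"
    proof -
      have "ln (\<delta> / 2) + t0 * lam n + (1 - t0) * (lam n - D)
          \<le> ln \<delta> + lam n - (1 - t0) * D"
        using ld by (simp add: algebra_simps)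
      also have "\<dots> = (1 / P) * (P * (ln \<delta> + lam n - (1 - t0) * D))"
        using Ppos by simp
      also have "\<dots> \<le> (1 / P) * (\<Sum>j\<in>{1..?Nm}. p j * ln (?h (v m j)))"
        using LB Ppos by (intro mult_left_mono) auto
      finally show ?thesis .
    qed
    then show "(let \<nu> = approx_measure_normalized \<mu> (N m) (U m) (v m);
             E = ellipsoid n (e m) (r m);
             k = nat \<lfloor>q\<rfloor>
         in (1 / total_mass \<nu>) * (LINT x : sphere 0 1 | \<nu>. ln (support_fun E x))
            \<ge> ln (\<delta> / 2) + t0 * ln (r m n)
              + (1 - t0) * ((\<Sum>i\<in>{1..k-1}. 2 / (real n + q - 1) * ln (r m i))
                  + (q - real k + 1) / (real n + q - 1) * ln (r m k)
                  + (\<Sum>i\<in>{k+1..n}. 1 / (real n + q - 1) * ln (r m i))))"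
      unfolding Let_def tmN n_def[symmetric] INT[unfolded n_def[symmetric]] BR by (simp add: lam_def)
  qed
  show ?thesis
    by (rule exI[of _ \<delta>], rule exI[of _ t0], rule exI[of _ N0]) (use \<delta>pos \<delta>1 t0 N0pos main in blast)
qed

end
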